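(* Let $q$ be a prime power, $m\ge2$, and $\Phi(x)=\sum_{i=0}^{2m}c_ix^{q^i}\in\mathbb{F}_q[x]$ with $c_{2m}=1$, $c_i=-c_{2m-i}$ for $0\le i\le m$, and $c_m=0$. Let $L(x)=\Phi(x)+t^qx^{q^{m+1}}-tx^{q^{m-1}}\in\mathbb{F}_q(t)[x]$ and let $f\in\mathbb{F}_q[x]$ be the monic polynomial with $f(0)=0$ and $f^q-f=x^{q^m}\Phi$. Then \[L(x)=x^{-q^m}\prod_{\lambda\in\mathbb{F}_q}\bigl(tx^{q^m+q^{m-1}}+f(x)+\lambda\bigr).\] Consequently $L(x)/x$ has exactly $q$ different irreducible factors over $\mathbb{F}_q(t)$: one of degree $(q^{m-1}-1)(q^m+1)$ and $q-1$ of degree $q^{m-1}(q^m+1)$. *)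

theory Defs
  imports "HOL-Library.Cardinality" "HOL-Computational_Algebra.Polynomial" "HOL-Computational_Algebra.Fraction_Field"
begin

text \<open>F_q is a finite field type 'a (q = CARD('a)); F_q(t) is the fraction field
  of 'a poly, i.e. the type ('a poly) fract, with t the image of the variable.\<close>

definition const_emb :: "'a::field \<Rightarrow> 'a poly fract" where
  "const_emb c = Fract [:c:] 1"

definition tvar :: "'a::field poly fract" where
  "tvar = Fract [:0, 1:] 1"

definition Phi :: "nat \<Rightarrow> (nat \<Rightarrow> 'a::{finite,field}) \<Rightarrow> 'a poly" where
  "Phi m c = (\<Sum>i = 0..2*m. monom (c i) (CARD('a) ^ i))"

definition Lpoly :: "nat \<Rightarrow> (nat \<Rightarrow> 'a::{finite,field}) \<Rightarrow> 'a poly fract poly" where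
  "Lpoly m c = map_poly const_emb (Phi m c)
      + monom (tvar ^ CARD('a)) (CARD('a) ^ (m + 1))
      - monom tvar (CARD('a) ^ (m - 1))"

end

theory Submission
  imports Defs "HOL-Computational_Algebra.Polynomial_Factorial" "HOL-Computational_Algebra.Euclidean_Algorithm"
begin

lemma map_poly_add_hom:
  assumes "h 0 = 0" "\<And>a b. h (a + b) = h a + h b"
  shows "map_poly h (p + q) = map_poly h p + map_poly h q"
  by (intro poly_eqI) (simp add: coeff_map_poly assms)

lemma map_poly_uminus_hom:
  fixes h :: "'a::ring \<Rightarrow> 'b::ring"
  assumes "h 0 = 0" "\<And>a. h (- a) = - h a"
  shows "map_poly h (- p) = - map_poly h p"
  by (intro poly_eqI) (simp add: coeff_map_poly assms)

lemma map_poly_diff_hom: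
  fixes h :: "'a::ring \<Rightarrow> 'b::ring"
  assumes "h 0 = 0" "\<And>a b. h (a - b) = h a - h b"
  shows "map_poly h (p - q) = map_poly h p - map_poly h q"
  by (intro poly_eqI) (simp add: coeff_map_poly assms)

lemma map_poly_mult_hom:
  fixes h :: "'a::comm_ring_1 \<Rightarrow> 'b::comm_ring_1"
  assumes h0: "h 0 = 0" and hadd: "\<And>a b. h (a + b) = h a + h b"
    and hmult: "\<And>a b. h (a * b) = h a * h b"
  shows "map_poly h (p * q) = map_poly h p * map_poly h q"
proof (induction p rule: pCons_induct)
  case 0
  then show ?case by simp
next
  case (pCons a p)
  have "map_poly h (pCons a p * q) = map_poly h (smult a q + pCons 0 (p * q))"
    by simp
  also have "\<dots> = smult (h a) (map_poly h q) + pCons 0 (map_poly h p * map_poly h q)"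
    by (simp add: map_poly_add_hom[OF h0 hadd] map_poly_smult[OF h0 hmult] map_poly_pCons[of h, OF h0] pCons.IH h0)
  also have "\<dots> = map_poly h (pCons a p) * map_poly h q"
    by (simp add: map_poly_pCons[of h, OF h0])
  finally show ?case .
qed

lemma map_poly_power_hom:
  fixes h :: "'a::comm_ring_1 \<Rightarrow> 'b::comm_ring_1"
  assumes h0: "h 0 = 0" and h1: "h 1 = 1" and hadd: "\<And>a b. h (a + b) = h a + h b"
    and hmult: "\<And>a b. h (a * b) = h a * h b"
  shows "map_poly h (p ^ n) = map_poly h p ^ n"
  by (induction n) (simp_all add: map_poly_mult_hom[OF h0 hadd hmult] h1)

lemma map_poly_prod_hom:
  fixes h :: "'a::comm_ring_1 \<Rightarrow> 'b::comm_ring_1"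
  assumes h0: "h 0 = 0" and h1: "h 1 = 1" and hadd: "\<And>a b. h (a + b) = h a + h b"
    and hmult: "\<And>a b. h (a * b) = h a * h b"
  shows "map_poly h (\<Prod>x\<in>A. g x) = (\<Prod>x\<in>A. map_poly h (g x))"
  by (induction A rule: infinite_finite_induct) (simp_all add: map_poly_mult_hom[OF h0 hadd hmult] h1)

lemma ff_power_card: "(x :: 'a :: {finite,field}) ^ CARD('a) = x"
proof (cases "x = 0")
  case False
  have "x * (\<Prod>y\<in>UNIV-{0}. x * y) = x * x ^ (card (UNIV :: 'a set) - 1) * \<Prod>(UNIV-{0})"
    by (simp add: prod.distrib mult_ac)
  also have "x * x ^ (card (UNIV :: 'a set) - 1) = x ^ Suc (card (UNIV :: 'a set) - 1)"
    by (subst power_Suc) auto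
  also have "Suc (card (UNIV :: 'a set) - 1) = card (UNIV :: 'a set)"
    using finite_UNIV_card_ge_0[where ?'a = 'a] by simp
  also have "(\<Prod>y\<in>UNIV-{0}. x * y) = (\<Prod>y\<in>UNIV-{0}. y)"
    by (rule prod.reindex_bij_witness[of _ "\<lambda>y. y / x" "\<lambda>y. x * y"]) (use False in auto)
  finally show ?thesis
    by simp
qed (use finite_UNIV_card_ge_0[where ?'a = 'a] in auto)

lemma card_ge2: "CARD('a :: {finite,field}) \<ge> 2"
proof -
  have "{0, 1::'a} \<subseteq> UNIV" by simp
  hence "card {0,1::'a} \<le> CARD('a)" by (intro card_mono) auto
  thus ?thesis by simp
qed

lemma ff_prod_linear:
  "(\<Prod>l\<in>(UNIV::'a::{finite,field} set). [:l, 1:]) = monom 1 CARD('a) - [:0, 1:]"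
proof -
  define q where "q = CARD('a)"
  have q2: "q \<ge> 2" using card_ge2[where 'a='a] by (simp add: q_def)
  define P where "P = (\<Prod>l\<in>(UNIV::'a set). [:l, 1:])"
  define D where "D = monom 1 q - [:0, 1:] - P"
  have degP: "degree P = q"
    unfolding P_def q_def by (subst degree_prod_eq_sum_degree) auto
  have lcP: "lead_coeff P = 1"
    unfolding P_def by (simp add: lead_coeff_prod)
  have degD: "degree D \<le> q"
    unfolding D_def using degP q2
    by (intro degree_diff_le) (auto simp: degree_monom_eq intro: order.trans[OF degree_pCons_le])
  have "coeff D q = 0"
  proof -
    obtain r where r: "q = Suc (Suc r)" using q2 by (metis add_2_eq_Suc le_Suc_ex)
    show ?thesis unfolding D_def using lcP degP by (simp add: r)
  qed
  have roots: "poly D a = 0" for a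
  proof -
    have "poly P a = 0"
      unfolding P_def poly_prod by (rule prod_zero) (auto intro!: exI[of _ "-a"])
    thus ?thesis unfolding D_def by (simp add: poly_monom ff_power_card q_def)
  qed
  have "P = monom 1 CARD('a) - [:0, 1:]"
  proof (rule ccontr)
    assume "P \<noteq> monom 1 CARD('a) - [:0, 1:]"
    hence "D \<noteq> 0" unfolding D_def q_def by auto
    hence "degree D < q" using degD \<open>coeff D q = 0\<close>
      by (metis le_neq_implies_less leading_coeff_0_iff)
    moreover have "card {x. poly D x = 0} \<le> degree D"
      using \<open>D \<noteq> 0\<close> by (rule card_poly_roots_bound)
    moreover have "{x. poly D x = 0} = UNIV" using roots by auto
    ultimately show False by (simp add: q_def)
  qed
  thus ?thesis by (simp add: P_def)
qed

lemma hom_diff: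
  fixes h :: "'a::comm_ring_1 \<Rightarrow> 'b::comm_ring_1"
  assumes hadd: "\<And>a b. h (a + b) = h a + h b"
  shows "h (a - b) = h a - h b"
  using hadd[of "a - b" b] by (simp add: algebra_simps)

lemma hom_of_nat:
  fixes h :: "'a::comm_ring_1 \<Rightarrow> 'b::comm_ring_1"
  assumes h0: "h 0 = 0" and h1: "h 1 = 1" and hadd: "\<And>a b. h (a + b) = h a + h b"
  shows "h (of_nat n) = of_nat n"
  by (induction n) (simp_all add: h0 h1 hadd)

lemma prod_Y:
  fixes h :: "'a::{finite,field} \<Rightarrow> 'b::comm_ring_1"
  assumes h0: "h 0 = 0" and h1: "h 1 = 1" and hadd: "\<And>a b. h (a + b) = h a + h b"
    and hmult: "\<And>a b. h (a * b) = h a * h b"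
  shows "(\<Prod>l\<in>(UNIV::'a set). Y + h l) = Y ^ CARD('a) - Y"
proof -
  have "poly (map_poly h (\<Prod>l\<in>(UNIV::'a set). [:l, 1:])) Y
      = poly (map_poly h (monom 1 CARD('a) - [:0, 1:])) Y"
    by (simp only: ff_prod_linear)
  moreover have "poly (map_poly h (\<Prod>l\<in>(UNIV::'a set). [:l, 1:])) Y = (\<Prod>l\<in>(UNIV::'a set). Y + h l)"
    by (simp add: map_poly_prod_hom[of h, OF h0 h1 hadd hmult] poly_prod map_poly_pCons[of h, OF h0] h0 h1 add.commute)
  moreover have "poly (map_poly h (monom 1 CARD('a) - [:0, 1:])) Y = Y ^ CARD('a) - Y"
    by (simp add: map_poly_diff_hom[of h, OF h0 hom_diff[of h, OF hadd]] map_poly_monom h0 h1 poly_monom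
        map_poly_pCons[of h, OF h0])
  ultimately show ?thesis by simp
qed

lemma ff_choose_zero:
  assumes "0 < k" "k < CARD('a::{finite,field})"
  shows "(of_nat (CARD('a) choose k) :: 'a) = 0"
proof -
  define q where "q = CARD('a)"
  have "(\<Prod>l\<in>(UNIV::'a set). [:1,1:] + [:l:]) = [:1,1:] ^ q - [:1,1:]"
    unfolding q_def by (rule prod_Y) simp_all
  moreover have "(\<Prod>l\<in>(UNIV::'a set). [:1,1:] + [:l:]) = (\<Prod>l\<in>(UNIV::'a set). [:l + 1,1:])"
    by (simp add: add.commute)
  moreover have "(\<Prod>l\<in>(UNIV::'a set). [:l + 1,1:]) = (\<Prod>l\<in>(UNIV::'a set). [:l,1:])"
    by (rule prod.reindex_bij_witness[of _ "\<lambda>x. x - 1" "\<lambda>x. x + 1"]) auto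
  ultimately have "[:1,1:] ^ q - [:1,1:] = monom 1 q - [:0, 1::'a:]"
    by (simp add: ff_prod_linear q_def)
  hence "coeff ([:1,1:] ^ q - [:1,1:]) k = coeff (monom 1 q - [:0, 1::'a:]) k" by simp
  moreover have "k \<le> q" using assms by (simp add: q_def)
  ultimately have "of_nat (q choose k) - coeff [:1,1::'a:] k = - coeff [:0, 1::'a:] k"
    using assms by (simp add: coeff_linear_poly_power q_def)
  moreover have "coeff [:1,1::'a:] k = coeff [:0, 1::'a:] k"
    using assms by (cases k) (auto simp: coeff_pCons split: nat.splits)
  ultimately show ?thesis by (simp add: q_def)
qed

lemma ff_freshman:
  fixes h :: "'a::{finite,field} \<Rightarrow> 'b::comm_ring_1"
  assumes h0: "h 0 = 0" and h1: "h 1 = 1" and hadd: "\<And>a b. h (a + b) = h a + h b"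
  shows "(u + v :: 'b) ^ CARD('a) = u ^ CARD('a) + v ^ CARD('a)"
proof -
  define n where "n = CARD('a)"
  have n2: "n \<ge> 2" using card_ge2[where 'a='a] by (simp add: n_def)
  have "(u + v) ^ n = (\<Sum>k\<le>n. of_nat (n choose k) * u ^ k * v ^ (n - k))"
    by (rule binomial_ring)
  also have "\<dots> = (\<Sum>k\<in>{0,n}. of_nat (n choose k) * u ^ k * v ^ (n - k))"
  proof (intro sum.mono_neutral_right ballI)
    fix k assume "k \<in> {..n} - {0, n}"
    hence k: "k > 0" "k < n" by auto
    have "(of_nat (n choose k) :: 'b) = h (of_nat (n choose k))"
      by (simp add: hom_of_nat[of h, OF h0 h1 hadd])
    also have "(of_nat (n choose k) :: 'a) = 0"
      using ff_choose_zero[of k, where 'a='a] k by (simp add: n_def)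
    finally show "of_nat (n choose k) * u ^ k * v ^ (n - k) = 0"
      by (simp add: h0)
  qed auto
  finally show ?thesis
    using n2 by (simp add: add_ac n_def)
qed


lemma ce_to_fract: "const_emb c = to_fract [:c:]"
  by (simp add: const_emb_def to_fract_def)

lemma tvar_to_fract: "tvar = to_fract [:0, 1:]"
  by (simp add: tvar_def to_fract_def)

lemma ce_0 [simp]: "const_emb 0 = 0" by (simp add: ce_to_fract)
lemma ce_1 [simp]: "const_emb 1 = 1" by (simp add: ce_to_fract one_pCons[symmetric])
lemma ce_add: "const_emb (a + b) = const_emb a + const_emb b"
  by (simp add: ce_to_fract flip: to_fract_add)
lemma ce_mult: "const_emb (a * b) = const_emb a * const_emb b"
  by (simp add: ce_to_fract flip: to_fract_mult)
lemma ce_eq_iff [simp]: "const_emb a = const_emb b \<longleftrightarrow> a = b" by (simp add: ce_to_fract)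
lemma ce_eq_0_iff [simp]: "const_emb a = 0 \<longleftrightarrow> a = 0" by (simp add: ce_to_fract)

lemma H_0: "[:const_emb (0::'a::field):] = 0" by simp
lemma H_1: "[:const_emb (1::'a::field):] = 1" by (simp add: one_pCons)
lemma H_add: "[:const_emb (a + b):] = [:const_emb a:] + [:const_emb b:]" by (simp add: ce_add)
lemma H_mult: "[:const_emb (a * b):] = [:const_emb a:] * [:const_emb b:]" by (simp add: ce_mult)

lemmas ce_map_mult = map_poly_mult_hom[of const_emb, OF ce_0 ce_add ce_mult]
lemmas ce_map_add = map_poly_add_hom[of const_emb, OF ce_0 ce_add]
lemmas ce_map_diff = map_poly_diff_hom[of const_emb, OF ce_0 hom_diff[of const_emb, OF ce_add]]
lemmas ce_map_power = map_poly_power_hom[of const_emb, OF ce_0 ce_1 ce_add ce_mult]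

lemma part1:
  fixes c :: "nat \<Rightarrow> 'a::{finite,field}" and m :: nat and f :: "'a poly"
  assumes m: "m \<ge> 1"
    and feq: "f ^ CARD('a) - f = monom 1 (CARD('a) ^ m) * Phi m c"
  shows "monom 1 (CARD('a) ^ m) * Lpoly m c =
           (\<Prod>l\<in>(UNIV :: 'a set).
              monom tvar (CARD('a) ^ m + CARD('a) ^ (m - 1))
              + map_poly const_emb f + [:const_emb l:])"
proof -
  define q where "q = CARD('a)"
  define N where "N = q ^ m + q ^ (m - 1)"
  define G where "G = monom tvar N + map_poly const_emb f"
  have "(\<Prod>l\<in>(UNIV :: 'a set). G + [:const_emb l:]) = G ^ q - G"
    unfolding q_def by (rule prod_Y) (simp_all add: H_add H_mult)
  also have "G ^ q = monom tvar N ^ q + map_poly const_emb f ^ q"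
    unfolding G_def q_def
    by (rule ff_freshman[where h="\<lambda>c. [:const_emb c:]"]) (simp_all add: H_add)
  also have "monom tvar N ^ q = monom (tvar ^ q) (q ^ (m + 1) + q ^ m)"
  proof -
    have "N * q = q ^ (m + 1) + q ^ m"
      using m unfolding N_def by (cases m) (simp_all add: algebra_simps)
    thus ?thesis by (simp add: monom_power)
  qed
  also have "map_poly const_emb f ^ q = map_poly const_emb (f ^ q)"
    by (simp add: ce_map_power)
  finally have "(\<Prod>l\<in>(UNIV :: 'a set). G + [:const_emb l:]) =
      monom (tvar ^ q) (q ^ (m + 1) + q ^ m) - monom tvar N + map_poly const_emb (f ^ q - f)"
    unfolding G_def by (simp add: ce_map_diff algebra_simps)
  also have "map_poly const_emb (f ^ q - f) = monom 1 (q ^ m) * map_poly const_emb (Phi m c)"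
    unfolding q_def feq by (simp add: ce_map_mult map_poly_monom)
  also have "monom (tvar ^ q) (q ^ (m + 1) + q ^ m) - monom tvar N + monom 1 (q ^ m) * map_poly const_emb (Phi m c)
      = monom 1 (q ^ m) * Lpoly m c"
    unfolding Lpoly_def q_def N_def
    by (simp add: algebra_simps mult_monom)
  finally show ?thesis unfolding G_def N_def q_def by simp
qed


definition swap :: "'a::field poly poly \<Rightarrow> 'a poly poly" where
  "swap p = poly (map_poly (map_poly (\<lambda>c. [:c:])) p) [:[:0, 1:]:]"

lemma swap_altdef:
  "swap p = (\<Sum>k\<le>degree p. smult (monom 1 k) (map_poly (\<lambda>c. [:c:]) (coeff p k)))"
proof -
  let ?H = "map_poly (\<lambda>c::'a. [:c:])"
  have deg: "degree (map_poly ?H p) = degree p"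
    by (rule degree_map_poly) (simp add: map_poly_eq_0_iff)
  have X: "[:[:0, 1::'a:]:] ^ k = [:monom 1 k:]" for k
  proof -
    have "[:0, 1::'a:] ^ k = monom 1 k"
      by (metis monom_altdef mult_1 one_pCons one_poly_eq_simps(1) power_one smult_1_left)
    thus ?thesis by (simp add: poly_const_pow)
  qed
  show ?thesis
    unfolding swap_def poly_altdef deg
    by (intro sum.cong refl) (simp add: coeff_map_poly X mult.commute)
qed

lemma swap_coeff: "coeff (coeff (swap p) i) j = coeff (coeff p j) i"
proof -
  have "coeff (coeff (swap p) i) j = (\<Sum>k\<le>degree p. if k = j then coeff (coeff p k) i else 0)"
    unfolding swap_altdef coeff_sum
    by (intro sum.cong refl) (simp add: coeff_map_poly coeff_monom)
  also have "\<dots> = coeff (coeff p j) i"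
    by (cases "j \<le> degree p") (auto simp: coeff_eq_0)
  finally show ?thesis .
qed

lemma swap_swap [simp]: "swap (swap p) = p"
  by (intro poly_eqI) (simp add: poly_eq_iff swap_coeff)

lemma swap_0 [simp]: "swap 0 = 0"
  by (simp add: swap_def)

lemma swap_1 [simp]: "swap 1 = 1"
  by (simp add: swap_def)

lemma swap_mult: "swap (p * q) = swap p * swap q"
proof -
  have h0: "map_poly (\<lambda>c::'a. [:c:]) 0 = 0" by simp
  have hadd: "map_poly (\<lambda>c::'a. [:c:]) (a + b) = map_poly (\<lambda>c. [:c:]) a + map_poly (\<lambda>c. [:c:]) b" for a b
    by (rule map_poly_add_hom) auto
  have hmult: "map_poly (\<lambda>c::'a. [:c:]) (a * b) = map_poly (\<lambda>c. [:c:]) a * map_poly (\<lambda>c. [:c:]) b" for a b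
    by (rule map_poly_mult_hom) auto
  show ?thesis
    unfolding swap_def by (simp add: map_poly_mult_hom[OF h0 hadd hmult])
qed

lemma swap_unit: "is_unit p \<Longrightarrow> is_unit (swap p)"
  by (metis dvd_def swap_1 swap_mult)

lemma irreducible_swap:
  assumes "irreducible (swap p)"
  shows "irreducible p"
proof (rule irreducibleI)
  show "p \<noteq> 0" using assms by (auto simp: irreducible_def)
  show "\<not> is_unit p" using assms swap_unit irreducible_def by blast
  fix a b assume "p = a * b"
  hence "swap p = swap a * swap b" by (simp add: swap_mult)
  hence "is_unit (swap a) \<or> is_unit (swap b)" using assms irreducibleD by blast
  thus "is_unit a \<or> is_unit b" using swap_unit[of "swap a"] swap_unit[of "swap b"] by auto
qed

lemma irr_lin:
  fixes A B :: "'a::field_gcd poly"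
  assumes A0: "A \<noteq> 0" and cop: "coprime B A"
    and deg: "degree (smult tvar (map_poly const_emb A) + map_poly const_emb B) \<noteq> 0"
  shows "irreducible (smult tvar (map_poly const_emb A) + map_poly const_emb B)"
proof -
  define Wp where "Wp = smult [:0,1:] (map_poly (\<lambda>c. [:c:]) A) + map_poly (\<lambda>c. [:c:]) B"
  have fw: "fract_poly Wp = smult tvar (map_poly const_emb A) + map_poly const_emb B"
  proof -
    have e: "const_emb = (\<lambda>x::'a. to_fract [:x:])" by (rule ext) (simp add: ce_to_fract)
    show ?thesis unfolding Wp_def e by (simp add: map_poly_map_poly o_def tvar_to_fract)
  qed
  have sw: "swap Wp = [:B, A:]"
  proof (rule poly_eqI)
    fix i
    show "coeff (swap Wp) i = coeff [:B, A:] i"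
      by (rule poly_eqI) (simp add: swap_coeff Wp_def coeff_map_poly coeff_pCons split: nat.split)
  qed
  have "irreducible [:B, A:]" using irreducible_linear_poly[of A B] assms by auto
  hence irrWp: "irreducible Wp" using irreducible_swap sw by metis
  have "degree (fract_poly Wp) = degree Wp"
    by (rule degree_map_poly) simp
  hence "degree Wp \<noteq> 0" using deg fw by simp
  with irrWp have "irreducible (fract_poly Wp)"
    using nonconst_poly_irreducible_iff by blast
  thus ?thesis using fw by simp
qed


typedef 'a wf = "UNIV :: 'a::field set" by simp

setup_lifting type_definition_wf

instantiation wf :: (field) field
begin
lift_definition zero_wf :: "'a wf" is 0 .
lift_definition one_wf :: "'a wf" is 1 .
lift_definition plus_wf :: "'a wf \<Rightarrow> 'a wf \<Rightarrow> 'a wf" is "(+)" .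
lift_definition minus_wf :: "'a wf \<Rightarrow> 'a wf \<Rightarrow> 'a wf" is "(-)" .
lift_definition uminus_wf :: "'a wf \<Rightarrow> 'a wf" is "uminus" .
lift_definition times_wf :: "'a wf \<Rightarrow> 'a wf \<Rightarrow> 'a wf" is "(*)" .
lift_definition inverse_wf :: "'a wf \<Rightarrow> 'a wf" is "inverse" .
lift_definition divide_wf :: "'a wf \<Rightarrow> 'a wf \<Rightarrow> 'a wf" is "(/)" .
instance
  by standard (transfer; simp add: algebra_simps divide_inverse)+
end

instantiation wf :: (field)
  "{unique_euclidean_ring, normalization_euclidean_semiring, normalization_semidom_multiplicative}"
begin
definition normalize_wf :: "'a wf \<Rightarrow> 'a wf" where "normalize_wf x = (if x = 0 then 0 else 1)"
definition unit_factor_wf :: "'a wf \<Rightarrow> 'a wf" where "unit_factor_wf x = x"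
definition modulo_wf :: "'a wf \<Rightarrow> 'a wf \<Rightarrow> 'a wf" where "modulo_wf x y = (if y = 0 then x else 0)"
definition euclidean_size_wf :: "'a wf \<Rightarrow> nat" where "euclidean_size_wf x = (if x = 0 then 0 else 1)"
definition division_segment_wf :: "'a wf \<Rightarrow> 'a wf" where "division_segment_wf x = 1"
instance
  by standard
    (simp_all add: normalize_wf_def unit_factor_wf_def modulo_wf_def euclidean_size_wf_def
      division_segment_wf_def dvd_field_iff field_split_simps split: if_splits)
end

instantiation wf :: (field) euclidean_ring_gcd
begin
definition gcd_wf :: "'a wf \<Rightarrow> 'a wf \<Rightarrow> 'a wf" where "gcd_wf = Euclidean_Algorithm.gcd"
definition lcm_wf :: "'a wf \<Rightarrow> 'a wf \<Rightarrow> 'a wf" where "lcm_wf = Euclidean_Algorithm.lcm"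
definition Gcd_wf :: "'a wf set \<Rightarrow> 'a wf" where "Gcd_wf = Euclidean_Algorithm.Gcd"
definition Lcm_wf :: "'a wf set \<Rightarrow> 'a wf" where "Lcm_wf = Euclidean_Algorithm.Lcm"
instance by standard (simp_all add: gcd_wf_def lcm_wf_def Gcd_wf_def Lcm_wf_def)
end

instance wf :: (field) field_gcd ..

lemma Abs_wf_0: "Abs_wf 0 = 0" by (simp add: zero_wf_def)
lemma Abs_wf_1: "Abs_wf 1 = 1" by (simp add: one_wf_def)
lemma Abs_wf_add: "Abs_wf (a + b) = Abs_wf a + Abs_wf b"
  by (simp add: plus_wf_def Abs_wf_inverse)
lemma Abs_wf_mult: "Abs_wf (a * b) = Abs_wf a * Abs_wf b"
  by (simp add: times_wf_def Abs_wf_inverse)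
lemma Abs_wf_eq_iff: "Abs_wf a = Abs_wf b \<longleftrightarrow> a = b"
  by (simp add: Abs_wf_inject)
lemma Abs_wf_eq_0_iff: "Abs_wf a = 0 \<longleftrightarrow> a = 0"
  by (metis Abs_wf_0 Abs_wf_eq_iff)


abbreviation Mw :: "'a::field poly \<Rightarrow> 'a wf poly" where "Mw \<equiv> map_poly Abs_wf"

lemma Mw_mult: "Mw (a * b) = Mw a * Mw b"
  by (rule map_poly_mult_hom) (simp_all add: Abs_wf_0 Abs_wf_add Abs_wf_mult)
lemma Mw_add: "Mw (a + b) = Mw a + Mw b"
  by (rule map_poly_add_hom) (simp_all add: Abs_wf_0 Abs_wf_add)
lemma Mw_eq_0_iff: "Mw a = 0 \<longleftrightarrow> a = 0"
  by (rule map_poly_eq_0_iff) (simp_all add: Abs_wf_0 Abs_wf_eq_0_iff)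
lemma Mw_1 [simp]: "Mw 1 = 1"
  by (simp add: Abs_wf_1)
lemma Mw_pCons [simp]: "Mw (pCons a p) = pCons (Abs_wf a) (Mw p)"
  by (rule map_poly_pCons) (simp add: Abs_wf_0)
declare Abs_wf_0 [simp] Abs_wf_1 [simp]

definition psi :: "'a::field poly fract \<Rightarrow> 'a wf poly fract" where
  "psi x = (let ab = (SOME ab. snd ab \<noteq> 0 \<and> x = Fract (fst ab) (snd ab)) in Fract (Mw (fst ab)) (Mw (snd ab)))"

lemma psi_Fract_nz:
  assumes "b \<noteq> 0"
  shows "psi (Fract a b) = Fract (Mw a) (Mw b)"
proof -
  define ab where "ab = (SOME ab. snd ab \<noteq> 0 \<and> Fract a b = Fract (fst ab) (snd ab))"
  have "\<exists>ab. snd ab \<noteq> 0 \<and> Fract a b = Fract (fst ab) (snd ab)"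
    using assms by (intro exI[of _ "(a, b)"]) auto
  hence ab: "snd ab \<noteq> 0" "Fract a b = Fract (fst ab) (snd ab)"
    unfolding ab_def by (metis (mono_tags, lifting) someI_ex)+
  hence "a * snd ab = fst ab * b" using assms by (simp add: eq_fract)
  hence "Mw a * Mw (snd ab) = Mw (fst ab) * Mw b" by (simp flip: Mw_mult)
  hence "Fract (Mw (fst ab)) (Mw (snd ab)) = Fract (Mw a) (Mw b)"
    using assms ab by (simp add: eq_fract Mw_eq_0_iff)
  thus ?thesis unfolding psi_def ab_def[symmetric] by (simp add: Let_def)
qed

lemma psi_Fract: "b \<noteq> 0 \<Longrightarrow> psi (Fract a b) = Fract (Mw a) (Mw b)"
  by (rule psi_Fract_nz)

lemma psi_add: "psi (x + y) = psi x + psi y"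
  by (cases x; cases y) (simp add: psi_Fract Mw_add Mw_mult Mw_eq_0_iff)
lemma psi_mult: "psi (x * y) = psi x * psi y"
  by (cases x; cases y) (simp add: psi_Fract Mw_add Mw_mult Mw_eq_0_iff)
lemma psi_0: "psi 0 = 0"
  by (simp add: Zero_fract_def psi_Fract)
lemma psi_1: "psi 1 = 1"
  by (simp add: One_fract_def psi_Fract Mw_1)
lemma psi_eq_0_iff: "psi x = 0 \<longleftrightarrow> x = 0"
  by (cases x) (simp add: psi_Fract Zero_fract_def eq_fract Mw_eq_0_iff)

lemma psi_ce: "psi (const_emb c) = const_emb (Abs_wf c)"
  by (simp add: const_emb_def psi_Fract Abs_wf_0 Mw_1)

lemma psi_tvar: "psi tvar = tvar"
  by (simp add: tvar_def psi_Fract Abs_wf_0 Abs_wf_1 Mw_1)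

abbreviation Psi :: "'a::field poly fract poly \<Rightarrow> 'a wf poly fract poly" where "Psi \<equiv> map_poly psi"

lemma Psi_mult: "Psi (a * b) = Psi a * Psi b"
  by (rule map_poly_mult_hom) (simp_all add: psi_0 psi_add psi_mult)

lemma degree_Psi: "degree (Psi a) = degree a"
  by (rule degree_map_poly) (simp add: psi_eq_0_iff)

lemma Psi_eq_0_iff: "Psi a = 0 \<longleftrightarrow> a = 0"
  by (rule map_poly_eq_0_iff) (simp_all add: psi_0 psi_eq_0_iff)

lemma field_poly_is_unit_iff: "is_unit (p :: 'b::field poly) \<longleftrightarrow> p \<noteq> 0 \<and> degree p = 0"
  by (auto simp: is_unit_poly_iff dvd_field_iff elim!: degree_eq_zeroE)

lemma irreducible_Psi:
  assumes "irreducible (Psi p)"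
  shows "irreducible p"
proof (rule irreducibleI)
  show "p \<noteq> 0" using assms by (auto simp: irreducible_def)
  show "\<not> is_unit p" using assms
    by (auto simp: irreducible_def field_poly_is_unit_iff degree_Psi Psi_eq_0_iff)
  fix a b assume "p = a * b"
  hence "Psi p = Psi a * Psi b" by (simp add: Psi_mult)
  hence "is_unit (Psi a) \<or> is_unit (Psi b)" using assms irreducibleD by blast
  thus "is_unit a \<or> is_unit b"
    by (auto simp: field_poly_is_unit_iff degree_Psi Psi_eq_0_iff)
qed


lemma coprime_monom:
  fixes B :: "'a::field_gcd poly"
  assumes "coeff B 0 \<noteq> 0"
  shows "coprime B (monom 1 k)"
proof -
  have pr: "prime_elem [:0, 1::'a:]" by (rule prime_elem_linear_field_poly) simp
  have "\<not> [:0, 1::'a:] dvd B"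
  proof
    assume "[:0, 1::'a:] dvd B"
    hence "poly B 0 = 0" using dvd_iff_poly_eq_0[of 0 B] by simp
    thus False using assms by (simp add: poly_0_coeff_0)
  qed
  hence "coprime [:0, 1::'a:] B" using pr prime_elem_imp_coprime by blast
  hence "coprime B ([:0, 1::'a:] ^ k)" by (simp add: coprime_commute)
  moreover have "[:0, 1::'a:] ^ k = monom 1 k"
    by (metis monom_altdef mult_1 one_pCons one_poly_eq_simps(1) power_one smult_1_left)
  ultimately show ?thesis by simp
qed

lemma Psi_lin:
  fixes A B :: "'a::field poly"
  shows "Psi (smult tvar (map_poly const_emb A) + map_poly const_emb B) =
         smult tvar (map_poly const_emb (Mw A)) + map_poly const_emb (Mw B)"
proof -
  have e: "Psi (map_poly const_emb p) = map_poly const_emb (Mw p)" for p :: "'a poly"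
    by (simp add: map_poly_map_poly o_def psi_ce psi_0)
  show ?thesis
    by (simp add: map_poly_add_hom[of psi, OF psi_0 psi_add] map_poly_smult[of psi, OF psi_0 psi_mult]
        e psi_tvar)
qed

lemma irr_main:
  fixes B :: "'a::field poly"
  assumes B0: "coeff B 0 \<noteq> 0"
    and deg: "degree (smult tvar (map_poly const_emb (monom 1 k)) + map_poly const_emb B) \<noteq> 0"
  shows "irreducible (smult tvar (map_poly const_emb (monom 1 k)) + map_poly const_emb B)"
proof (rule irreducible_Psi)
  have Mm: "Mw (monom 1 k) = monom 1 k" by (simp add: map_poly_monom)
  show "irreducible (Psi (smult tvar (map_poly const_emb (monom 1 k)) + map_poly const_emb B))"
    unfolding Psi_lin Mm
  proof (rule irr_lin)
    show "monom 1 k \<noteq> (0 :: 'a wf poly)" by simp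
    show "coprime (Mw B) (monom 1 k)"
      by (rule coprime_monom) (use B0 in \<open>simp add: coeff_map_poly Abs_wf_eq_0_iff\<close>)
    show "degree (smult tvar (map_poly const_emb (monom 1 k)) + map_poly const_emb (Mw B)) \<noteq> 0"
      using deg degree_Psi[of "smult tvar (map_poly const_emb (monom 1 k)) + map_poly const_emb B"]
      unfolding Psi_lin Mm by simp
  qed
qed


lemma prime_elem_dvd_prod_set:
  fixes p :: "'b::comm_semiring_1"
  assumes "prime_elem p" "finite T" "p dvd \<Prod>T"
  shows "\<exists>x\<in>T. p dvd x"
  using assms(2,3)
proof (induction T rule: finite_induct)
  case empty
  then show ?case using assms(1) by (simp add: prime_elem_def)
next
  case (insert x F)
  hence "p dvd x * \<Prod>F" by simp
  hence "p dvd x \<or> p dvd \<Prod>F" using assms(1) prime_elem_dvd_mult_iff by blast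
  thus ?case using insert by auto
qed

lemma monic_irr_divisors:
  fixes T :: "'b::field poly set"
  assumes fin: "finite T" and T: "\<And>x. x \<in> T \<Longrightarrow> irreducible x \<and> lead_coeff x = 1"
  shows "{p. irreducible p \<and> lead_coeff p = 1 \<and> p dvd \<Prod>T} = T"
proof safe
  fix p assume p: "irreducible p" "lead_coeff p = 1" "p dvd \<Prod>T"
  have "prime_elem p" using p(1) by (rule field_poly_irreducible_imp_prime)
  then obtain x where x: "x \<in> T" "p dvd x" using prime_elem_dvd_prod_set fin p(3) by blast
  then obtain r where r: "x = p * r" by (auto elim: dvdE)
  have "is_unit p \<or> is_unit r" using T[OF x(1)] r irreducibleD by blast
  hence "is_unit r" using p(1) by (auto simp: irreducible_def)
  then obtain r0 where r0: "r = [:r0:]" by (auto simp: is_unit_poly_iff)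
  have "lead_coeff x = lead_coeff p * lead_coeff r" using r by (simp add: lead_coeff_mult)
  hence "r0 = 1" using T[OF x(1)] p(2) r0 by simp
  hence "x = p" using r r0 by simp
  thus "p \<in> T" using x by simp
next
  fix x assume "x \<in> T"
  thus "irreducible x" "lead_coeff x = 1" using T by auto
  show "x dvd \<Prod>T" using dvd_prodI[of T x "\<lambda>x. x"] fin \<open>x \<in> T\<close> by simp
qed

lemma coeff_power_low:
  fixes p :: "'b::comm_semiring_1 poly"
  assumes "\<forall>k<i. coeff p k = 0" "j < i * n"
  shows "coeff (p ^ n) j = 0"
proof -
  have "monom 1 i dvd p" using assms(1) by (simp add: monom_1_dvd_iff')
  hence "monom 1 i ^ n dvd p ^ n" by (rule dvd_power_same)
  hence "monom 1 (i * n) dvd p ^ n" by (simp add: monom_power)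
  thus ?thesis using assms(2) by (simp add: monom_1_dvd_iff')
qed

lemma coeff_Phi:
  fixes c :: "nat \<Rightarrow> 'a::{finite,field}"
  shows "coeff (Phi m c) k = (\<Sum>i=0..2*m. if CARD('a) ^ i = k then c i else 0)"
  unfolding Phi_def by (simp add: coeff_sum coeff_monom)

lemma coeff_Phi_at:
  assumes "j \<le> 2 * m"
  shows "coeff (Phi m (c :: nat \<Rightarrow> 'a::{finite,field})) (CARD('a) ^ j) = c j"
proof -
  have q: "CARD('a) > 1" using card_ge2[where 'a='a] by simp
  have "coeff (Phi m c) (CARD('a) ^ j) = (\<Sum>i=0..2*m. if i = j then c i else 0)"
    unfolding coeff_Phi using q by (intro sum.cong refl) (simp add: power_inject_exp)
  also have "\<dots> = c j" using assms by (simp add: sum.delta)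
  finally show ?thesis .
qed

lemma coeff_Phi_0: "coeff (Phi m (c :: nat \<Rightarrow> 'a::{finite,field})) 0 = 0"
  unfolding coeff_Phi by (intro sum.neutral) simp

lemma degree_Phi_le: "degree (Phi m (c :: nat \<Rightarrow> 'a::{finite,field})) \<le> CARD('a) ^ (2 * m)"
  unfolding Phi_def
proof (intro degree_sum_le)
  fix i assume "i \<in> {0..2*m}"
  hence "CARD('a) ^ i \<le> CARD('a) ^ (2 * m)"
    using card_ge2[where 'a='a] by (intro power_increasing) auto
  thus "degree (monom (c i) (CARD('a) ^ i)) \<le> CARD('a) ^ (2 * m)"
    using degree_monom_le order.trans by blast
qed simp


lemma f_facts:
  fixes c :: "nat \<Rightarrow> 'a::{finite,field}" and f :: "'a poly"
  assumes m: "m \<ge> 1" and c2m: "c (2*m) = 1" and c0: "c 0 = -1" and lc: "lead_coeff f = 1"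
    and f0: "poly f 0 = 0"
    and feq: "f ^ CARD('a) - f = monom 1 (CARD('a)^m) * Phi m c"
  shows "degree f = CARD('a)^(m-1) * (CARD('a)^m + 1)"
    and "\<forall>i \<le> CARD('a)^m. coeff f i = 0"
    and "coeff f (CARD('a)^m + 1) = 1"
proof -
  define q where "q = CARD('a)"
  have q2: "q \<ge> 2" using card_ge2[where 'a='a] by (simp add: q_def)
  define R where "R = monom 1 (q^m) * Phi m c"
  have feq': "f ^ q - f = R" using feq by (simp add: q_def R_def)
  have coeffR: "coeff R k = (if k < q^m then 0 else coeff (Phi m c) (k - q^m))" for k
    unfolding R_def by (simp add: coeff_monom_mult)
  have cPhi: "coeff (Phi m c) (q ^ (2*m)) = 1"
    using coeff_Phi_at[of "2*m" m c] c2m by (simp add: q_def)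
  have degPhi: "degree (Phi m c) = q ^ (2*m)"
    using degree_Phi_le[of m c] le_degree[of "Phi m c" "q ^ (2*m)"] cPhi by (simp add: q_def)
  have Phi0: "Phi m c \<noteq> 0" using cPhi by auto
  have degR: "degree R = q^m + q^(2*m)"
    unfolding R_def using Phi0 by (simp add: degree_mult_eq degree_monom_eq degPhi)
  have fnz: "f \<noteq> 0" using lc by auto
  have degpos: "degree f > 0"
  proof (rule ccontr)
    assume "\<not> degree f > 0"
    then obtain a where "f = [:a:]" by (metis degree_eq_zeroE gr0I)
    hence "degree (f ^ q - f) = 0" by (simp add: poly_const_pow)
    thus False using feq' degR q2 by simp
  qed
  have "degree (f ^ q) = q * degree f" using fnz by (simp add: degree_power_eq)
  moreover have "q * degree f > degree f" using degpos q2 by simp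
  ultimately have "degree (f ^ q + (- f)) = q * degree f"
    by (subst degree_add_eq_left) simp_all
  hence "q * degree f = q^m + q^(2*m)" using feq' degR by simp
  moreover obtain k where k: "m = Suc k" using m by (cases m) auto
  ultimately have "q * degree f = q * (q^k + q^(2*k+1))"
    by (simp add: algebra_simps power_add power_Suc mult_2)
  hence "degree f = q^k + q^(2*k+1)" using q2 by simp
  moreover have "q^k * (q^m + 1) = q^k + q^(2*k+1)"
  proof -
    have "q^k * q^(Suc k) = q^(k + Suc k)" by (rule power_add[symmetric])
    also have "k + Suc k = 2*k+1" by simp
    finally have "q^k * q^(Suc k) = q^(2*k+1)" .
    thus ?thesis by (simp add: k distrib_left)
  qed
  ultimately show "degree f = CARD('a)^(m-1) * (CARD('a)^m + 1)"
    by (simp add: k q_def)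
  have low: "\<forall>j<i. coeff f j = 0" if "i \<le> q^m + 1" for i
    using that
  proof (induction i)
    case 0
    then show ?case by simp
  next
    case (Suc i)
    hence IH: "\<forall>j<i. coeff f j = 0" and i: "i \<le> q^m" by auto
    have "coeff f i = 0"
    proof (cases "i = 0")
      case True
      then show ?thesis using f0 by (simp add: poly_0_coeff_0)
    next
      case False
      have "coeff (f ^ q) i = 0"
        using IH False q2 by (intro coeff_power_low[of i]) auto
      moreover have "coeff R i = 0"
        using i by (simp add: coeffR coeff_Phi_0 q_def)
      moreover have "coeff (f ^ q - f) i = coeff R i" using feq' by simp
      ultimately show ?thesis by (simp only: coeff_diff) simp
    qed
    thus ?case using IH less_Suc_eq by auto
  qed
  thus "\<forall>i \<le> CARD('a)^m. coeff f i = 0" unfolding q_def by auto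
  have L: "\<forall>j<q^m+1. coeff f j = 0" using low[of "q^m+1"] by simp
  have qm: "q^m \<ge> 1" using q2 by simp
  have "(q^m + 1) * 2 \<le> (q^m + 1) * q" using q2 by (intro mult_left_mono) auto
  moreover have "q^m + 1 < (q^m + 1) * (2::nat)" by simp
  ultimately have lt: "q^m + 1 < (q^m + 1) * q" by linarith
  have "coeff (f ^ q) (q^m+1) = 0"
    using L lt by (intro coeff_power_low[of "q^m+1"]) auto
  moreover have "coeff R (q^m+1) = -1"
    using coeff_Phi_at[of 0 m c] c0 by (simp add: coeffR q_def)
  moreover have "coeff (f ^ q - f) (q^m+1) = coeff R (q^m+1)" using feq' by simp
  ultimately have "- coeff f (q^m+1) = -1" by (simp only: coeff_diff) simp
  thus "coeff f (CARD('a)^m + 1) = 1" by (simp add: q_def)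
qed


lemma monom_1_1: "monom (1::'b::comm_semiring_1) 1 = [:0, 1:]"
  by (intro poly_eqI) (simp add: coeff_monom coeff_pCons split: nat.split)

theorem corollary4p6:
  fixes c :: "nat \<Rightarrow> 'a::{finite,field}" and m :: nat and f :: "'a poly"
  assumes "m \<ge> 2"
    and "c (2*m) = 1"
    and "\<forall>i \<le> m. c i = - c (2*m - i)"
    and "c m = 0"
    and "lead_coeff f = 1" and "poly f 0 = 0"
    and "f ^ CARD('a) - f = monom 1 (CARD('a) ^ m) * Phi m c"
  shows "(monom 1 (CARD('a) ^ m) * Lpoly m c =
           (\<Prod>l\<in>(UNIV :: 'a set).
              monom tvar (CARD('a) ^ m + CARD('a) ^ (m - 1))
              + map_poly const_emb f + [:const_emb l:]))
    \<and> (let P = Lpoly m c div [:0, 1:];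
             S = {p. irreducible p \<and> lead_coeff p = 1 \<and> p dvd P}
         in card S = CARD('a)
            \<and> card {p \<in> S. degree p = (CARD('a) ^ (m - 1) - 1) * (CARD('a) ^ m + 1)} = 1
            \<and> card {p \<in> S. degree p = CARD('a) ^ (m - 1) * (CARD('a) ^ m + 1)} = CARD('a) - 1)"
proof -
  note m2 = assms(1) and c2m = assms(2) and lc = assms(5) and f0 = assms(6) and feq = assms(7)
  define q where "q = CARD('a)"
  have q2: "q \<ge> 2" using card_ge2[where 'a='a] by (simp add: q_def)
  have c0: "c 0 = -1" using assms(3) c2m by auto
  have m1: "m \<ge> 1" using m2 by simp
  have P1: "monom 1 (q ^ m) * Lpoly m c =
           (\<Prod>l\<in>(UNIV :: 'a set). monom tvar (q ^ m + q ^ (m - 1)) + map_poly const_emb f + [:const_emb l:])"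
    unfolding q_def by (rule part1[OF m1 feq])
  have degf: "degree f = q^(m-1) * (q^m + 1)"
    and low: "\<forall>i \<le> q^m. coeff f i = 0" and cv: "coeff f (q^m + 1) = 1"
    using f_facts[OF m1 c2m c0 lc f0 feq] by (simp_all add: q_def)
  define v where "v = q^m + 1"
  define k0 where "k0 = q^(m-1) - 1"
  define N where "N = q^m + q^(m-1)"
  have qm1: "q^(m-1) \<ge> 2"
  proof -
    have "q^1 \<le> q^(m-1)" using q2 m2 by (intro power_increasing) auto
    thus ?thesis using q2 by simp
  qed
  have Nv: "N = v + k0" using qm1 unfolding N_def v_def k0_def by simp
  have "monom 1 v dvd f" using low unfolding v_def by (simp add: monom_1_dvd_iff')
  then obtain f1 where f1: "f = monom 1 v * f1" by (auto elim: dvdE)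
  have f1_0: "coeff f1 0 = 1" using cv f1 unfolding v_def by (simp add: coeff_monom_mult)
  have f1nz: "f1 \<noteq> 0" using f1_0 by auto
  have degf_f1: "degree f = v + degree f1" using f1 f1nz by (simp add: degree_mult_eq degree_monom_eq)
  have lcf1: "lead_coeff f1 = 1" using lc f1 by (simp add: lead_coeff_mult degree_monom_eq)
  have degf': "degree f = q^(m-1) * v" using degf by (simp add: v_def)
  have "degree f1 = q^(m-1) * v - 1 * v" using degf' degf_f1 by simp
  also have "\<dots> = k0 * v" unfolding k0_def by (rule diff_mult_distrib[symmetric])
  finally have degf1: "degree f1 = k0 * v" .
  have k0pos: "k0 \<ge> 1" using qm1 by (simp add: k0_def)
  have v2: "v \<ge> 2" using q2 by (simp add: v_def)
  have k0_lt: "k0 < degree f1"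
  proof -
    have "k0 * 1 < k0 * v" using k0pos v2 by (intro mult_strict_left_mono) auto
    thus ?thesis using degf1 by simp
  qed
  have N_lt: "N < degree f"
  proof -
    have "q^m * 1 < q^m * q^(m-1)" using qm1 q2 by (intro mult_strict_left_mono) auto
    thus ?thesis using degf unfolding N_def by (simp add: algebra_simps)
  qed
  have degfpos: "degree f > 0" using N_lt by simp

  define Gl where "Gl l = monom tvar N + map_poly const_emb f + [:const_emb l:]" for l
  define G0 where "G0 = monom tvar k0 + map_poly const_emb f1"
  have monom_form: "monom tvar k = smult tvar (map_poly const_emb (monom 1 k))" for k
    by (simp add: map_poly_monom smult_monom)
  have Gl_form: "Gl l = smult tvar (map_poly const_emb (monom 1 N)) + map_poly const_emb (f + [:l:])" for l
    unfolding Gl_def monom_form[symmetric] by (simp add: ce_map_add map_poly_pCons)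
  have G0_form: "G0 = smult tvar (map_poly const_emb (monom 1 k0)) + map_poly const_emb f1"
    unfolding G0_def monom_form[symmetric] by simp
  have degmap: "degree (map_poly const_emb p) = degree p" for p :: "'a poly"
    by (rule degree_map_poly) simp
  have lcmap: "lead_coeff (map_poly const_emb p) = const_emb (lead_coeff p)" for p :: "'a poly"
    by (simp add: degmap coeff_map_poly)
  have degfl: "degree (f + [:l:]) = degree f" for l
    using degfpos by (subst degree_add_eq_left) auto
  have lcfl: "lead_coeff (f + [:l:]) = 1" for l
    using degfpos lc by (simp add: degfl coeff_pCons split: nat.split)
  have deg_Gl: "degree (Gl l) = degree f" and lc_Gl: "lead_coeff (Gl l) = 1" for l
  proof -
    have d: "degree (monom tvar N) < degree (map_poly const_emb (f + [:l:]))"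
      using le_less_trans[OF degree_monom_le[of tvar N] N_lt] by (simp add: degmap degfl)
    have "Gl l = monom tvar N + map_poly const_emb (f + [:l:])"
      unfolding Gl_def by (simp add: ce_map_add map_poly_pCons)
    thus "degree (Gl l) = degree f" "lead_coeff (Gl l) = 1"
      using degree_add_eq_right[OF d] lead_coeff_add_le[OF d] lcfl[of l] degfl[of l]
      by (simp_all add: degmap coeff_map_poly)
  qed
  have deg_G0: "degree G0 = k0 * v" and lc_G0: "lead_coeff G0 = 1"
  proof -
    have d: "degree (monom tvar k0) < degree (map_poly const_emb f1)"
      using le_less_trans[OF degree_monom_le[of tvar k0] k0_lt] by (simp add: degmap)
    thus "degree G0 = k0 * v" "lead_coeff G0 = 1"
      unfolding G0_def using degree_add_eq_right[OF d] lead_coeff_add_le[OF d] lcf1 degf1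
      by (simp_all add: degmap coeff_map_poly)
  qed
  have irr_Gl: "irreducible (Gl l)" if "l \<noteq> 0" for l
  proof -
    have "coeff (f + [:l:]) 0 \<noteq> 0" using low that by simp
    moreover have "degree (Gl l) \<noteq> 0" using deg_Gl degfpos by simp
    ultimately show ?thesis unfolding Gl_form by (intro irr_main) (simp_all add: Gl_form[symmetric])
  qed
  have irr_G0: "irreducible G0"
  proof -
    have "degree G0 \<noteq> 0" using deg_G0 k0pos v2 by simp
    thus ?thesis unfolding G0_form by (intro irr_main) (simp_all add: f1_0 G0_form[symmetric])
  qed
  have inj: "inj_on Gl (UNIV - {0})"
    by (intro inj_onI) (simp add: Gl_def)
  have G0_notin: "G0 \<notin> Gl ` (UNIV - {0})"
  proof
    assume "G0 \<in> Gl ` (UNIV - {0})"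
    then obtain l where "G0 = Gl l" by auto
    hence "k0 * v = q^(m-1) * v" using deg_G0 deg_Gl[of l] degf' by metis
    thus False using v2 qm1 by (simp add: k0_def)
  qed
  have Gl0: "Gl 0 = monom 1 v * G0"
  proof -
    have "monom tvar N = monom 1 v * monom tvar k0" by (simp add: mult_monom Nv)
    moreover have "map_poly const_emb f = monom 1 v * map_poly const_emb f1"
      by (simp add: f1 ce_map_mult map_poly_monom)
    ultimately show ?thesis unfolding Gl_def G0_def by (simp add: algebra_simps)
  qed
  define Q where "Q = (\<Prod>l\<in>UNIV - {0}. Gl l)"
  have "(\<Prod>l\<in>(UNIV :: 'a set). Gl l) = Gl 0 * Q"
    unfolding Q_def by (subst prod.remove[of UNIV 0]) auto
  hence "monom 1 (q ^ m) * Lpoly m c = monom 1 (q^m) * ([:0, 1:] * (G0 * Q))"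
    using P1 unfolding Gl_def[symmetric] N_def[symmetric] Gl0 v_def
    by (simp add: mult_monom monom_1_1[symmetric] mult.assoc)
  moreover have "monom (1 :: 'a poly fract) (q ^ m) \<noteq> 0" by simp
  ultimately have Leq: "Lpoly m c = [:0, 1:] * (G0 * Q)" using mult_left_cancel by blast
  hence Pdef: "Lpoly m c div [:0, 1:] = G0 * Q"
    by (simp only:) (rule nonzero_mult_div_cancel_left, simp)
  define T where "T = insert G0 (Gl ` (UNIV - {0}))"
  have finT: "finite T" unfolding T_def by simp
  have prodT: "\<Prod>T = G0 * Q"
    unfolding T_def Q_def using G0_notin by (simp add: prod.reindex[OF inj])
  have S: "{p. irreducible p \<and> lead_coeff p = 1 \<and> p dvd Lpoly m c div [:0, 1:]} = T"
    unfolding Pdef prodT[symmetric]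
    by (rule monic_irr_divisors[OF finT]) (auto simp: T_def irr_G0 lc_G0 irr_Gl lc_Gl)
  have cardimg: "card (Gl ` (UNIV - {0})) = q - 1"
    using inj by (simp add: card_image card_Diff_singleton q_def)
  have cardT: "card T = q"
    unfolding T_def using G0_notin cardimg q2 by simp
  have D0: "{p \<in> T. degree p = k0 * v} = {G0}"
    unfolding T_def using deg_G0 deg_Gl degf' v2 qm1 by (auto simp: k0_def)
  have D1: "{p \<in> T. degree p = q^(m-1) * v} = Gl ` (UNIV - {0})"
    unfolding T_def using deg_G0 deg_Gl degf' v2 qm1 by (auto simp: k0_def)
  show ?thesis
    unfolding Let_def S
    using P1 cardT D0 D1 cardimg unfolding q_def k0_def v_def by simp
qed


end
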